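(* Let $a,b,q$ be complex numbers with $q\ne0$, and define $B_{n,k}(a,b)$ ($n\ge k\ge0$) by $$z^k=\sum_{n=k}^\infty B_{n,k}(a,b)\,z^n\frac{(az;q)_n}{(bz;q)_n}\qquad(k\ge0)$$ in $\mathbb{C}[[z]]$. Then for every integer $n\ge1$, as rational functions of $y$, $$\sum_{k=0}^nB_{n,k}(a,b)y^k=\frac{(b/y;q)_{n-1}}{(a/y;q)_n}y^{n}-a\sum_{k=0}^{n-1}B_{n-k,1}(a,b)\,q^{(n-k)k}\frac{(b/y;q)_k}{(a/y;q)_{k+1}}y^k.$$
   Context: $(x;q)_n=\prod_{j=0}^{n-1}(1-xq^j)$ for $n\ge0$, $(x;q)_0=1$. The family $\{z^n(az;q)_n/(bz;q)_n\}_{n\ge0}$ is a basis of $\mathbb{C}[[z]]$ in the formal sense, so the $B_{n,k}(a,b)$ are uniquely determined. *)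

theory Defs
  imports Complex_Main "HOL-Computational_Algebra.Formal_Power_Series"
begin

definition qpoch :: "complex \<Rightarrow> complex \<Rightarrow> nat \<Rightarrow> complex" where
  "qpoch x q n = (\<Prod>j<n. 1 - x * q ^ j)"

definition qpoch_fps :: "complex \<Rightarrow> complex \<Rightarrow> nat \<Rightarrow> complex fps" where
  "qpoch_fps c q n = (\<Prod>j<n. 1 - fps_const (c * q ^ j) * fps_X)"

definition qbasis :: "complex \<Rightarrow> complex \<Rightarrow> complex \<Rightarrow> nat \<Rightarrow> complex fps" where
  "qbasis a b q n = fps_X ^ n * qpoch_fps a q n / qpoch_fps b q n"

text \<open>The formal infinite
  sum is expressed coefficientwise: the m-th coefficient of the n-th term
  vanishes for n > m, so only n = k..m contribute to the coefficient of z^m.\<close>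
definition Bcoef :: "complex \<Rightarrow> complex \<Rightarrow> complex \<Rightarrow> nat \<Rightarrow> nat \<Rightarrow> complex" where
  "Bcoef a b q = (THE B. (\<forall>n k. n < k \<longrightarrow> B n k = 0) \<and>
      (\<forall>k m. fps_nth (fps_X ^ k) m = (\<Sum>n=k..m. B n k * fps_nth (qbasis a b q n) m)))"

end

theory Submission
  imports Defs
begin

lemma qpoch_fps_Suc: "qpoch_fps c q (Suc n) = qpoch_fps c q n * (1 - fps_const (c * q ^ n) * fps_X)"
  by (simp add: qpoch_fps_def)

lemma qpoch_fps_0: "fps_nth (qpoch_fps c q n) 0 = 1"
  by (induction n) (simp_all add: qpoch_fps_Suc qpoch_fps_def)

lemma qbasis_alt: "qbasis a b q n = fps_X ^ n * qpoch_fps a q n * inverse (qpoch_fps b q n)"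
  unfolding qbasis_def by (rule fps_divide_unit) (simp add: qpoch_fps_0)

lemma qbasis_nth_less: "m < n \<Longrightarrow> fps_nth (qbasis a b q n) m = 0"
  unfolding qbasis_alt mult.assoc fps_X_power_mult_nth by simp

lemma qbasis_nth_diag: "fps_nth (qbasis a b q n) n = 1"
  unfolding qbasis_alt mult.assoc fps_X_power_mult_nth by (simp add: qpoch_fps_0)

lemma tri_unique:
  assumes "\<forall>m\<le>N. (\<Sum>k=0..m. c k * fps_nth (qbasis a b q k) m) = (\<Sum>k=0..m. d k * fps_nth (qbasis a b q k) m)"
  shows "k \<le> N \<Longrightarrow> c k = d k"
proof (induction k rule: less_induct)
  case (less k)
  have "(\<Sum>j=0..k. c j * fps_nth (qbasis a b q j) k) = (\<Sum>j=0..k. d j * fps_nth (qbasis a b q j) k)"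
    using assms less.prems by auto
  moreover have "(\<Sum>j=0..<k. c j * fps_nth (qbasis a b q j) k) = (\<Sum>j=0..<k. d j * fps_nth (qbasis a b q j) k)"
    using less by (intro sum.cong) auto
  moreover have "\<And>f. (\<Sum>j=0..k. f j) = (\<Sum>j=0..<k. f j) + (f k :: complex)"
    by (simp add: sum.last_plus)
  ultimately show ?case by (simp add: qbasis_nth_diag)
qed

function Bx :: "complex \<Rightarrow> complex \<Rightarrow> complex \<Rightarrow> nat \<Rightarrow> nat \<Rightarrow> complex" where
  "Bx a b q k n = (if n < k then 0 else if n = k then 1
     else - (\<Sum>j\<in>{k..<n}. Bx a b q k j * fps_nth (qbasis a b q j) n))"
  by pat_completeness auto
termination by (relation "measure (\<lambda>(a,b,q,k,n). n)") auto

declare Bx.simps[simp del]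

definition SB where "SB a b q B \<longleftrightarrow> (\<forall>n k. n < k \<longrightarrow> B n k = 0) \<and>
      (\<forall>k m. fps_nth (fps_X ^ k) m = (\<Sum>n=k..m. B n k * fps_nth (qbasis a b q n) m))"

lemma SB_Bx: "SB a b q (\<lambda>n k. Bx a b q k n)"
  unfolding SB_def
proof (intro conjI allI impI)
  fix n k :: nat assume "n < k" then show "Bx a b q k n = 0" by (subst Bx.simps) simp
next
  fix k m :: nat
  consider "m < k" | "m = k" | "k < m" by linarith
  then show "fps_nth (fps_X ^ k) m = (\<Sum>n = k..m. Bx a b q k n * fps_nth (qbasis a b q n) m)"
  proof cases
    case 1 then show ?thesis by simp
  next
    case 2 then show ?thesis by (subst Bx.simps) (simp add: qbasis_nth_diag)
  next
    case 3
    have "(\<Sum>n = k..m. Bx a b q k n * fps_nth (qbasis a b q n) m)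
       = (\<Sum>n = k..<m. Bx a b q k n * fps_nth (qbasis a b q n) m) + Bx a b q k m"
      using 3 by (simp add: sum.last_plus qbasis_nth_diag add.commute)
    also have "Bx a b q k m = - (\<Sum>n = k..<m. Bx a b q k n * fps_nth (qbasis a b q n) m)"
      using 3 by (subst Bx.simps) simp
    finally show ?thesis using 3 by simp
  qed
qed

lemma SB_full:
  assumes "SB a b q B"
  shows "(\<Sum>n=0..m. B n k * fps_nth (qbasis a b q n) m) = fps_nth (fps_X ^ k) m"
proof (cases "k \<le> m")
  case True
  have "(\<Sum>n=0..m. B n k * fps_nth (qbasis a b q n) m) = (\<Sum>n=k..m. B n k * fps_nth (qbasis a b q n) m)"
    using assms unfolding SB_def by (intro sum.mono_neutral_right) auto
  then show ?thesis using assms unfolding SB_def by simp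
next
  case False
  have "fps_nth (fps_X ^ k) m = 0" using False by simp
  moreover have "(\<Sum>n=0..m. B n k * fps_nth (qbasis a b q n) m) = 0"
    using assms False unfolding SB_def by (intro sum.neutral) auto
  ultimately show ?thesis by simp
qed

lemma SB_unique:
  assumes "SB a b q B" "SB a b q B'"
  shows "B = B'"
proof (intro ext)
  fix n k
  show "B n k = B' n k"
    by (rule tri_unique[where N=n and a=a and b=b and q=q and c="\<lambda>n. B n k" and d="\<lambda>n. B' n k"])
       (simp_all add: SB_full[OF assms(1)] SB_full[OF assms(2)])
qed

lemma SB_Bcoef: "SB a b q (Bcoef a b q)"
proof -
  have "\<exists>!B. SB a b q B" using SB_Bx SB_unique by blast
  then have "SB a b q (THE B. SB a b q B)" by (rule theI')
  moreover have "Bcoef a b q = (THE B. SB a b q B)" unfolding Bcoef_def SB_def by (rule refl)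
  ultimately show ?thesis by simp
qed


lemma Bcoef_less: "n < k \<Longrightarrow> Bcoef a b q n k = 0"
  using SB_Bcoef unfolding SB_def by blast

lemma Bcoef_full: "(\<Sum>n=0..m. Bcoef a b q n k * fps_nth (qbasis a b q n) m) = fps_nth (fps_X ^ k) m"
  by (rule SB_full[OF SB_Bcoef])

lemma P_expand:
  "(\<Sum>k=0..m. (\<Sum>j=0..k. Bcoef a b q k j * y^j) * fps_nth (qbasis a b q k) m) = y^m"
proof -
  have e: "(\<Sum>j=0..k. Bcoef a b q k j * y^j) = (\<Sum>j=0..m. Bcoef a b q k j * y^j)" if "k \<in> {0..m}" for k
    using that by (intro sum.mono_neutral_left) (auto simp: Bcoef_less)
  have "(\<Sum>k=0..m. (\<Sum>j=0..k. Bcoef a b q k j * y^j) * fps_nth (qbasis a b q k) m)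
      = (\<Sum>k=0..m. (\<Sum>j=0..m. Bcoef a b q k j * y^j) * fps_nth (qbasis a b q k) m)"
    using e by (intro sum.cong) auto
  also have "\<dots> = (\<Sum>j=0..m. y^j * (\<Sum>k=0..m. Bcoef a b q k j * fps_nth (qbasis a b q k) m))"
    unfolding sum_distrib_right sum_distrib_left
    by (subst sum.swap) (simp add: mult_ac)
  also have "\<dots> = (\<Sum>j=0..m. y^j * fps_nth (fps_X ^ j) m)"
    by (simp add: Bcoef_full)
  also have "\<dots> = y^m" by (simp add: if_distrib cong: if_cong)
  finally show ?thesis .
qed

definition eqM :: "nat \<Rightarrow> complex fps \<Rightarrow> complex fps \<Rightarrow> bool" where
  "eqM M f g \<longleftrightarrow> (\<forall>m\<le>M. fps_nth f m = fps_nth g m)"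

lemma eqM_refl: "eqM M f f" by (simp add: eqM_def)
lemma eqM_trans: "eqM M f g \<Longrightarrow> eqM M g h \<Longrightarrow> eqM M f h" by (simp add: eqM_def)
lemma eqM_eq: "f = g \<Longrightarrow> eqM M f g" by (simp add: eqM_def)
lemma eqM_add: "eqM M f g \<Longrightarrow> eqM M f' g' \<Longrightarrow> eqM M (f + f') (g + g')" by (simp add: eqM_def)
lemma eqM_diff: "eqM M f g \<Longrightarrow> eqM M f' g' \<Longrightarrow> eqM M (f - f') (g - g')" by (simp add: eqM_def)
lemma eqM_mult_left: "eqM M f g \<Longrightarrow> eqM M (h * f) (h * g)"
  unfolding eqM_def fps_mult_nth by (auto intro!: sum.cong)
lemma eqM_mult_right: "eqM M f g \<Longrightarrow> eqM M (f * h) (g * h)"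
  using eqM_mult_left[of M f g h] by (simp add: mult.commute)
lemma eqM_sum: "(\<And>i. i \<in> S \<Longrightarrow> eqM M (f i) (g i)) \<Longrightarrow> eqM M (sum f S) (sum g S)"
  unfolding eqM_def fps_sum_nth by (auto intro!: sum.cong)
lemma eqM_shift: "eqM M f g \<Longrightarrow> eqM (M + i) (fps_X ^ i * f) (fps_X ^ i * g)"
  unfolding eqM_def fps_X_power_mult_nth by auto
lemma eqM_Xpow_zero: "eqM M (fps_X ^ Suc M * f) 0"
  unfolding eqM_def fps_X_power_mult_nth by auto

definition scl :: "complex \<Rightarrow> complex fps \<Rightarrow> complex fps" where
  "scl c f = Abs_fps (\<lambda>m. c ^ m * fps_nth f m)"

lemma scl_nth [simp]: "fps_nth (scl c f) m = c ^ m * fps_nth f m"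
  by (simp add: scl_def)

lemma scl_mult: "scl c (f * g) = scl c f * scl c g"
proof (rule fps_ext)
  fix m
  have "c ^ m * fps_nth (f * g) m = (\<Sum>i=0..m. (c^i * fps_nth f i) * (c^(m-i) * fps_nth g (m - i)))"
    unfolding fps_mult_nth sum_distrib_left
  proof (intro sum.cong refl)
    fix i assume "i \<in> {0..m}"
    then have "c ^ m = c ^ i * c ^ (m - i)" by (simp add: power_add[symmetric])
    then show "c ^ m * (fps_nth f i * fps_nth g (m - i)) = c ^ i * fps_nth f i * (c ^ (m - i) * fps_nth g (m - i))"
      by (simp add: mult_ac)
  qed
  then show "fps_nth (scl c (f * g)) m = fps_nth (scl c f * scl c g) m"
    by (simp add: fps_mult_nth)
qed

lemma scl_one [simp]: "scl c 1 = 1"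
  by (rule fps_ext) (simp add: fps_one_nth)
lemma scl_add: "scl c (f + g) = scl c f + scl c g"
  by (rule fps_ext) (simp add: algebra_simps)
lemma scl_diff: "scl c (f - g) = scl c f - scl c g"
  by (rule fps_ext) (simp add: algebra_simps)
lemma scl_const [simp]: "scl c (fps_const d) = fps_const d"
  by (rule fps_ext) simp
lemma scl_X [simp]: "scl c fps_X = fps_const c * fps_X"
  by (rule fps_ext) (case_tac n, simp_all add: fps_X_nth)
lemma scl_power: "scl c (f ^ n) = scl c f ^ n"
  by (induction n) (simp_all add: scl_mult)
lemma scl_inverse:
  assumes "fps_nth f 0 \<noteq> 0"
  shows "scl c (inverse f) = inverse (scl c f)"
proof -
  have "scl c f * scl c (inverse f) = 1"
    using assms by (simp add: scl_mult[symmetric] inverse_mult_eq_1')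
  then show ?thesis by (simp add: fps_inverse_unique)
qed


definition qsh :: "complex \<Rightarrow> complex \<Rightarrow> nat \<Rightarrow> nat \<Rightarrow> complex fps" where
  "qsh c q i j = (\<Prod>l<j. 1 - fps_const (c * q ^ (i + l)) * fps_X)"

lemma qsh_Suc: "qsh c q i (Suc j) = qsh c q i j * (1 - fps_const (c * q ^ (i + j)) * fps_X)"
  by (simp add: qsh_def)

lemma qsh_0: "fps_nth (qsh c q i j) 0 = 1"
  by (induction j) (simp_all add: qsh_Suc qsh_def)

lemma scl_qpoch: "scl (q ^ i) (qpoch_fps c q j) = qsh c q i j"
proof (induction j)
  case 0 then show ?case by (simp add: qsh_def qpoch_fps_def)
next
  case (Suc j)
  have "scl (q ^ i) (fps_const (c * q ^ j) * fps_X) = fps_const (c * q ^ (i + j)) * fps_X"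
    by (simp add: scl_mult power_add mult_ac)
  then show ?case using Suc by (simp add: qpoch_fps_Suc qsh_Suc scl_mult scl_diff)
qed

lemma qpoch_add: "qpoch_fps c q (i + j) = qpoch_fps c q i * qsh c q i j"
  by (induction j) (simp_all add: qsh_def qpoch_fps_Suc qsh_Suc mult_ac)

lemma qbasis_shift:
  "fps_const (q ^ (j * i)) * qbasis a b q (i + j) = qbasis a b q i * scl (q ^ i) (qbasis a b q j)"
proof -
  have "scl (q ^ i) (qbasis a b q j) = (fps_const (q ^ i) * fps_X) ^ j * qsh a q i j * inverse (qsh b q i j)"
    unfolding qbasis_alt scl_mult scl_power
    by (simp add: scl_inverse qpoch_fps_0 scl_qpoch)
  moreover have "qbasis a b q (i + j) = fps_X ^ (i + j) * (qpoch_fps a q i * qsh a q i j)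
      * (inverse (qpoch_fps b q i) * inverse (qsh b q i j))"
    unfolding qbasis_alt qpoch_add fps_inverse_mult ..
  ultimately show ?thesis unfolding qbasis_alt
    by (simp add: power_mult_distrib power_add power_mult mult_ac)
qed

definition AA :: "complex \<Rightarrow> complex \<Rightarrow> complex \<Rightarrow> complex \<Rightarrow> nat \<Rightarrow> complex" where
  "AA a b q y k = qpoch (b / y) q (k - 1) / qpoch (a / y) q k * y ^ k"
definition CC :: "complex \<Rightarrow> complex \<Rightarrow> complex \<Rightarrow> complex \<Rightarrow> nat \<Rightarrow> complex" where
  "CC a b q y i = qpoch (b / y) q i / qpoch (a / y) q (i + 1) * y ^ i"
definition tt :: "complex \<Rightarrow> complex \<Rightarrow> complex \<Rightarrow> complex \<Rightarrow> nat \<Rightarrow> complex fps" where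
  "tt a b q y k = fps_const (AA a b q y k) - fps_const (a * q ^ k * CC a b q y k) * fps_X"

lemma qpoch_Suc: "qpoch x q (Suc k) = qpoch x q k * (1 - x * q ^ k)"
  by (simp add: qpoch_def)

lemma qpoch_factor_nz: "qpoch x q n \<noteq> 0 \<Longrightarrow> k < n \<Longrightarrow> 1 - x * q ^ k \<noteq> 0"
  unfolding qpoch_def by (auto simp: prod_zero_iff)

lemma qpoch_nz_le: "qpoch x q n \<noteq> 0 \<Longrightarrow> k \<le> n \<Longrightarrow> qpoch x q k \<noteq> 0"
  unfolding qpoch_def by (auto simp: prod_zero_iff)

lemma s1: "AA a b q y (Suc N) = y * CC a b q y N"
  by (simp add: AA_def CC_def mult_ac)

lemma s2:
  assumes "y \<noteq> 0" "qpoch (a / y) q (Suc (Suc M)) \<noteq> 0"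
  shows "CC a b q y (Suc M) * (y - a * q ^ Suc M) = AA a b q y (Suc M) * (y - b * q ^ M)"
proof -
  have d1: "1 - a / y * q ^ Suc M \<noteq> 0" using qpoch_factor_nz[OF assms(2), of "Suc M"] by simp
  have d2: "qpoch (a / y) q (Suc M) \<noteq> 0" using qpoch_nz_le[OF assms(2)] by simp
  have e1: "y - a * q ^ Suc M = y * (1 - a / y * q ^ Suc M)" using assms(1) by (simp add: field_simps)
  have e2: "y - b * q ^ M = y * (1 - b / y * q ^ M)" using assms(1) by (simp add: field_simps)
  have c: "CC a b q y (Suc M) = (qpoch (b/y) q M * (1 - b / y * q ^ M))
      / (qpoch (a/y) q (Suc M) * (1 - a / y * q ^ Suc M)) * y ^ Suc M"
    unfolding CC_def Suc_eq_plus1[symmetric] qpoch_Suc[of "a/y" q "Suc M"] qpoch_Suc[of "b/y" q M] ..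
  have a: "AA a b q y (Suc M) = qpoch (b/y) q M / qpoch (a/y) q (Suc M) * y ^ Suc M"
    unfolding AA_def by simp
  have fl: "\<And>X Y v w z y :: complex. Y \<noteq> 0 \<Longrightarrow> w \<noteq> 0 \<Longrightarrow>
     (X*v)/(Y*w)*z*(y*w) = X/Y*z*(y*v)" by (simp add: field_simps)
  show ?thesis unfolding e1 e2 c a by (rule fl[OF d2 d1])
qed

lemma s0:
  assumes "y \<noteq> 0" "qpoch (a / y) q (Suc 0) \<noteq> 0"
  shows "CC a b q y 0 * (y - a) = y" "AA a b q y 0 = 1"
proof -
  have d1: "1 - a / y \<noteq> 0" using qpoch_factor_nz[OF assms(2), of 0] by simp
  have e1: "y - a = y * (1 - a / y)" using assms(1) by (simp add: field_simps)
  show "CC a b q y 0 * (y - a) = y" unfolding e1 CC_def using d1 by (simp add: qpoch_def)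
  show "AA a b q y 0 = 1" by (simp add: AA_def qpoch_def)
qed

lemma alg_step:
  fixes A A' C aC y al be X Y P Q :: "'a::idom"
  assumes "A' = y*C" "aC = al*C" "C*y - aC = A*y - A*be"
  shows "(1 - A*Y*P*((1 - be*X)*Q)) + (A - aC*X)*(Y*P*Q)*(1 - y*X) = 1 - A'*(X*Y)*(P*(1 - al*X))*Q"
  using assms by algebra

lemma alg_base:
  fixes A1 C aC y a X :: "'a::idom"
  assumes "A1 = y*C" "aC = a*C" "C*y - aC = y"
  shows "(1 - aC*X)*(1 - y*X) = 1 - A1*X*(1 - a*X)"
  using assms by algebra

lemma alg_final:
  fixes S A y be X Y P Q :: "'a::idom"
  assumes "S*(1 - y*X) = 1 - A*Y*P*((1 - be*X)*Q)"
  shows "(S + A*(Y*P*Q))*(1 - y*X) = 1 + (X*Y)*(A*P*Q*(be - y))"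
  using assms by algebra


lemma inv_rel:
  "inverse (qpoch_fps b q M) = (1 - fps_const (b * q ^ M) * fps_X) * inverse (qpoch_fps b q (Suc M))"
proof -
  have h: "fps_nth (1 - fps_const (b * q ^ M) * fps_X) 0 \<noteq> 0" by simp
  have "inverse (qpoch_fps b q (Suc M)) = inverse (qpoch_fps b q M) * inverse (1 - fps_const (b * q ^ M) * fps_X)"
    by (simp add: qpoch_fps_Suc fps_inverse_mult)
  then have "(1 - fps_const (b * q ^ M) * fps_X) * inverse (qpoch_fps b q (Suc M))
      = inverse (qpoch_fps b q M) * ((1 - fps_const (b * q ^ M) * fps_X) * inverse (1 - fps_const (b * q ^ M) * fps_X))"
    by (simp add: mult_ac)
  also have "\<dots> = inverse (qpoch_fps b q M)" using inverse_mult_eq_1'[OF h] by simp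
  finally show ?thesis by simp
qed

lemma telescope:
  assumes y: "y \<noteq> 0" and nz: "qpoch (a/y) q n \<noteq> 0"
  shows "1 \<le> N \<Longrightarrow> N \<le> n \<Longrightarrow> (\<Sum>k<N. tt a b q y k * qbasis a b q k) * (1 - fps_const y * fps_X)
     = 1 - fps_const (AA a b q y N) * fps_X ^ N * qpoch_fps a q N * inverse (qpoch_fps b q (N - 1))"
proof (induction N)
  case 0 then show ?case by simp
next
  case (Suc N)
  show ?case
  proof (cases "N = 0")
    case True
    have q1: "qpoch (a/y) q (Suc 0) \<noteq> 0" using qpoch_nz_le[OF nz] Suc.prems by simp
    have b0: "qbasis a b q 0 = 1" by (simp add: qbasis_alt qpoch_fps_def)
    have pa1: "qpoch_fps a q (Suc 0) = 1 - fps_const a * fps_X" by (simp add: qpoch_fps_def)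
    have pb0: "qpoch_fps b q 0 = 1" by (simp add: qpoch_fps_def)
    have sc: "CC a b q y 0 * y - a * CC a b q y 0 = y" using s0(1)[OF y q1] by (simp add: algebra_simps)
    have h3: "fps_const (CC a b q y 0) * fps_const y - fps_const (a * CC a b q y 0) = fps_const y"
      unfolding fps_const_mult fps_const_sub sc ..
    have h1: "fps_const (AA a b q y 1) = fps_const y * fps_const (CC a b q y 0)"
      using s1[of a b q y 0] by simp
    have h2: "fps_const (a * CC a b q y 0) = fps_const a * fps_const (CC a b q y 0)" by simp
    have "(\<Sum>k<Suc N. tt a b q y k * qbasis a b q k) * (1 - fps_const y * fps_X)
        = (1 - fps_const (a * CC a b q y 0) * fps_X) * (1 - fps_const y * fps_X)"
      using True by (simp add: tt_def b0 s0(2)[OF y q1])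
    also have "\<dots> = 1 - fps_const (AA a b q y 1) * fps_X * (1 - fps_const a * fps_X)"
      by (rule alg_base[OF h1 h2 h3])
    also have "\<dots> = 1 - fps_const (AA a b q y (Suc N)) * fps_X ^ Suc N * qpoch_fps a q (Suc N)
        * inverse (qpoch_fps b q (Suc N - 1))"
      using True by (simp add: pa1 pb0)
    finally show ?thesis .
  next
    case False
    then obtain M where M: "N = Suc M" by (cases N) auto
    have IH: "(\<Sum>k<N. tt a b q y k * qbasis a b q k) * (1 - fps_const y * fps_X)
     = 1 - fps_const (AA a b q y N) * fps_X ^ N * qpoch_fps a q N * inverse (qpoch_fps b q M)"
      using Suc M by simp
    have q2: "qpoch (a/y) q (Suc (Suc M)) \<noteq> 0" using qpoch_nz_le[OF nz] Suc.prems M by simp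
    have sc: "CC a b q y N * y - a * q ^ N * CC a b q y N = AA a b q y N * y - AA a b q y N * (b * q ^ M)"
      using s2[OF y q2] M by (simp add: algebra_simps)
    have h3: "fps_const (CC a b q y N) * fps_const y - fps_const (a * q ^ N * CC a b q y N)
       = fps_const (AA a b q y N) * fps_const y - fps_const (AA a b q y N) * fps_const (b * q ^ M)"
      unfolding fps_const_mult fps_const_sub sc ..
    have h1: "fps_const (AA a b q y (Suc N)) = fps_const y * fps_const (CC a b q y N)"
      using s1[of a b q y N] by simp
    have h2: "fps_const (a * q ^ N * CC a b q y N) = fps_const (a * q ^ N) * fps_const (CC a b q y N)" by simp
    have "(\<Sum>k<Suc N. tt a b q y k * qbasis a b q k) * (1 - fps_const y * fps_X)
       = (\<Sum>k<N. tt a b q y k * qbasis a b q k) * (1 - fps_const y * fps_X)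
         + tt a b q y N * qbasis a b q N * (1 - fps_const y * fps_X)"
      by (simp add: distrib_right)
    also have "\<dots> = (1 - fps_const (AA a b q y N) * fps_X ^ N * qpoch_fps a q N
          * ((1 - fps_const (b * q ^ M) * fps_X) * inverse (qpoch_fps b q N)))
        + (fps_const (AA a b q y N) - fps_const (a * q ^ N * CC a b q y N) * fps_X)
          * (fps_X ^ N * qpoch_fps a q N * inverse (qpoch_fps b q N)) * (1 - fps_const y * fps_X)"
      unfolding IH unfolding tt_def qbasis_alt M inv_rel[of b q M] ..
    also have "\<dots> = 1 - fps_const (AA a b q y (Suc N)) * (fps_X * fps_X ^ N)
        * (qpoch_fps a q N * (1 - fps_const (a * q ^ N) * fps_X)) * inverse (qpoch_fps b q N)"
      by (rule alg_step[OF h1 h2 h3])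
    also have "\<dots> = 1 - fps_const (AA a b q y (Suc N)) * fps_X ^ Suc N * qpoch_fps a q (Suc N)
        * inverse (qpoch_fps b q (Suc N - 1))"
      by (simp add: qpoch_fps_Suc)
    finally show ?thesis .
  qed
qed


lemma fps_const_sum': "fps_const (sum f S) = (\<Sum>i\<in>S. fps_const (f i))"
  apply (induction S rule: infinite_finite_induct)
    apply simp
   apply simp
  apply (simp add: fps_const_add[symmetric] del: fps_const_add)
  done

lemma E_inv: "Abs_fps (\<lambda>m. (y::complex) ^ m) * (1 - fps_const y * fps_X) = 1"
proof (rule fps_ext)
  fix m
  have "Abs_fps (\<lambda>m. y ^ m) * (1 - fps_const y * fps_X) = Abs_fps (\<lambda>m. y ^ m) - (Abs_fps (\<lambda>m. y ^ m) * fps_const y) * fps_X"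
    by (simp only: right_diff_distrib mult_1_right mult.assoc)
  then show "fps_nth (Abs_fps (\<lambda>m. y ^ m) * (1 - fps_const y * fps_X)) m = fps_nth 1 m"
    by (cases m) (simp_all add: fps_mult_right_const_nth mult.commute)
qed

lemma D_eq:
  "eqM (n - i) (\<Sum>j=1..n-i. fps_const (Bcoef a b q j 1) * scl (q ^ i) (qbasis a b q j)) (fps_const (q ^ i) * fps_X)"
  unfolding eqM_def
proof (intro allI impI)
  fix m assume m: "m \<le> n - i"
  have "(\<Sum>j=1..n-i. Bcoef a b q j 1 * fps_nth (qbasis a b q j) m) = (\<Sum>j=0..n-i. Bcoef a b q j 1 * fps_nth (qbasis a b q j) m)"
    by (rule sum.mono_neutral_left) (auto simp: Bcoef_less)
  also have "\<dots> = (\<Sum>j=0..m. Bcoef a b q j 1 * fps_nth (qbasis a b q j) m)"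
    using m by (intro sum.mono_neutral_right) (auto simp: qbasis_nth_less)
  also have "\<dots> = fps_nth (fps_X ^ 1) m" by (rule Bcoef_full)
  finally have s: "(\<Sum>j=1..n-i. Bcoef a b q j 1 * fps_nth (qbasis a b q j) m) = fps_nth fps_X m" by simp
  have "fps_nth (\<Sum>j=1..n-i. fps_const (Bcoef a b q j 1) * scl (q ^ i) (qbasis a b q j)) m
      = (q ^ i) ^ m * (\<Sum>j=1..n-i. Bcoef a b q j 1 * fps_nth (qbasis a b q j) m)"
    by (simp add: fps_sum_nth sum_distrib_left mult_ac)
  also have "\<dots> = (q ^ i) ^ m * fps_nth fps_X m" by (simp only: s)
  also have "\<dots> = fps_nth (fps_const (q ^ i) * fps_X) m" by (cases "m = 1") (auto simp: fps_X_nth)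
  finally show "fps_nth (\<Sum>j=1..n-i. fps_const (Bcoef a b q j 1) * scl (q ^ i) (qbasis a b q j)) m
      = fps_nth (fps_const (q ^ i) * fps_X) m" .
qed

lemma inner_eq:
  assumes "i < n"
  shows "(\<Sum>k=Suc i..n. fps_const (Bcoef a b q (k - i) 1 * q ^ ((k - i) * i) * c) * qbasis a b q k)
    = fps_const c * (qbasis a b q i * (\<Sum>j=1..n-i. fps_const (Bcoef a b q j 1) * scl (q ^ i) (qbasis a b q j)))"
proof -
  have iv: "{Suc i..n} = {1 + i..(n - i) + i}" using assms by auto
  have "(\<Sum>k=Suc i..n. fps_const (Bcoef a b q (k - i) 1 * q ^ ((k - i) * i) * c) * qbasis a b q k)
      = (\<Sum>j=1..n-i. fps_const (Bcoef a b q j 1 * q ^ (j * i) * c) * qbasis a b q (i + j))"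
    unfolding iv sum.shift_bounds_cl_nat_ivl by (simp add: add.commute)
  also have "\<dots> = (\<Sum>j=1..n-i. fps_const c * (fps_const (Bcoef a b q j 1) * (fps_const (q ^ (j * i)) * qbasis a b q (i + j))))"
    by (intro sum.cong refl) (simp del: fps_const_mult add: fps_const_mult[symmetric] mult_ac)
  also have "\<dots> = (\<Sum>j=1..n-i. fps_const c * (fps_const (Bcoef a b q j 1) * (qbasis a b q i * scl (q ^ i) (qbasis a b q j))))"
    by (simp only: qbasis_shift)
  also have "\<dots> = fps_const c * (qbasis a b q i * (\<Sum>j=1..n-i. fps_const (Bcoef a b q j 1) * scl (q ^ i) (qbasis a b q j)))"
    by (simp add: sum_distrib_left mult_ac)
  finally show ?thesis .
qed


theorem corollary2p1:
  fixes a b q y :: complex and n :: nat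
  assumes "q \<noteq> 0" and "n \<ge> 1"
    and "y \<noteq> 0" and "qpoch (a / y) q n \<noteq> 0"
  shows "(\<Sum>k=0..n. Bcoef a b q n k * y ^ k)
       = qpoch (b / y) q (n - 1) / qpoch (a / y) q n * y ^ n
         - a * (\<Sum>k=0..n-1. Bcoef a b q (n - k) 1 * q ^ ((n - k) * k)
                  * qpoch (b / y) q k / qpoch (a / y) q (k + 1) * y ^ k)"
proof -
  note y = assms(3) and nz = assms(4)
  define \<phi> where "\<phi> = qbasis a b q"
  define B where "B = Bcoef a b q"
  define T where "T k i = B (k - i) 1 * q ^ ((k - i) * i) * CC a b q y i" for k i
  define R where "R k = AA a b q y k - a * (\<Sum>i<k. T k i)" for k
  define P where "P k = (\<Sum>j=0..k. B k j * y ^ j)" for k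
  define D where "D i = (\<Sum>j=1..n-i. fps_const (B j 1) * scl (q ^ i) (\<phi> j))" for i
  define G where "G = (\<Sum>k=0..n. fps_const (R k) * \<phi> k)"
  define H1 where "H1 = (\<Sum>k=0..n. fps_const (AA a b q y k) * \<phi> k)"
  define H where "H = H1 - fps_const a * (\<Sum>i<n. fps_const (CC a b q y i) * (\<phi> i * (fps_const (q ^ i) * fps_X)))"
  define S where "S = (\<Sum>k<n. tt a b q y k * \<phi> k)"
  define E where "E = Abs_fps (\<lambda>m. y ^ m)"
  have r: "fps_const (R k) * \<phi> k = fps_const (AA a b q y k) * \<phi> k - fps_const a * (\<Sum>i<k. fps_const (T k i) * \<phi> k)" for k
    unfolding R_def
    by (simp only: fps_const_sub[symmetric] fps_const_mult[symmetric] fps_const_sum' left_diff_distrib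
        sum_distrib_right mult.assoc)
  have G1: "G = H1 - fps_const a * (\<Sum>k=0..n. \<Sum>i<k. fps_const (T k i) * \<phi> k)"
    unfolding G_def H1_def r sum_subtractf sum_distrib_left ..
  have G2: "(\<Sum>k=0..n. \<Sum>i<k. fps_const (T k i) * \<phi> k)
      = (\<Sum>i<n. fps_const (CC a b q y i) * (\<phi> i * D i))"
  proof -
    have "(\<Sum>k=0..n. \<Sum>i<k. fps_const (T k i) * \<phi> k) = (\<Sum>i<n. \<Sum>k=Suc i..n. fps_const (T k i) * \<phi> k)"
      using sum.nested_swap'[of "\<lambda>k i. fps_const (T k i) * \<phi> k" n] by (simp add: atLeast0AtMost)
    also have "\<dots> = (\<Sum>i<n. fps_const (CC a b q y i) * (\<phi> i * D i))"
      unfolding T_def B_def \<phi>_def D_def by (intro sum.cong refl inner_eq) simp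
    finally show ?thesis .
  qed
  have GH: "eqM n G H"
    unfolding G1 G2 H_def
  proof (rule eqM_diff[OF eqM_refl], rule eqM_mult_left, rule eqM_sum, rule eqM_mult_left)
    fix i assume i: "i \<in> {..<n}"
    have "eqM (n - i + i) (fps_X ^ i * (qpoch_fps a q i * inverse (qpoch_fps b q i) * D i))
        (fps_X ^ i * (qpoch_fps a q i * inverse (qpoch_fps b q i) * (fps_const (q ^ i) * fps_X)))"
      by (intro eqM_shift eqM_mult_left) (unfold D_def B_def \<phi>_def, rule D_eq)
    then show "eqM n (\<phi> i * D i) (\<phi> i * (fps_const (q ^ i) * fps_X))"
      using i by (simp add: \<phi>_def qbasis_alt mult.assoc)
  qed
  have HS: "H = S + fps_const (AA a b q y n) * \<phi> n"
  proof -
    have "H1 = (\<Sum>k<n. fps_const (AA a b q y k) * \<phi> k) + fps_const (AA a b q y n) * \<phi> n"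
      unfolding H1_def by (simp add: atLeast0AtMost lessThan_Suc_atMost[symmetric])
    moreover have "fps_const a * (\<Sum>i<n. fps_const (CC a b q y i) * (\<phi> i * (fps_const (q ^ i) * fps_X)))
        = (\<Sum>i<n. fps_const (a * q ^ i * CC a b q y i) * fps_X * \<phi> i)"
      unfolding sum_distrib_left
      by (intro sum.cong refl) (simp del: fps_const_mult add: fps_const_mult[symmetric] mult_ac)
    moreover have "S = (\<Sum>k<n. fps_const (AA a b q y k) * \<phi> k) - (\<Sum>i<n. fps_const (a * q ^ i * CC a b q y i) * fps_X * \<phi> i)"
      unfolding S_def tt_def by (simp add: sum_subtractf left_diff_distrib)
    ultimately show ?thesis unfolding H_def by simp
  qed
  have HE1: "H * (1 - fps_const y * fps_X) = 1 + (fps_X * fps_X ^ n) *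
      (fps_const (AA a b q y n) * qpoch_fps a q n * inverse (qpoch_fps b q n) * (fps_const (b * q ^ (n - 1)) - fps_const y))"
  proof -
    have n1: "Suc (n - 1) = n" using assms(2) by simp
    have tel: "S * (1 - fps_const y * fps_X) = 1 - fps_const (AA a b q y n) * fps_X ^ n * qpoch_fps a q n
       * ((1 - fps_const (b * q ^ (n - 1)) * fps_X) * inverse (qpoch_fps b q n))"
      using telescope[OF y nz assms(2) order.refl] inv_rel[of b q "n - 1"] n1
      unfolding S_def \<phi>_def by simp
    show ?thesis unfolding HS \<phi>_def qbasis_alt
      using alg_final[OF tel[unfolded \<phi>_def]] unfolding \<phi>_def by simp
  qed
  have HE: "eqM n H E"
  proof -
    obtain W where W: "H * (1 - fps_const y * fps_X) = 1 + fps_X ^ Suc n * W"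
      using HE1 by (metis power_Suc)
    have "eqM n ((1 + fps_X ^ Suc n * W) * E) ((1 + 0) * E)"
      by (intro eqM_mult_right eqM_add eqM_refl eqM_Xpow_zero)
    then have "eqM n (H * (1 - fps_const y * fps_X) * E) (1 * E)"
      unfolding W by simp
    moreover have "H * (1 - fps_const y * fps_X) * E = H"
      using E_inv[of y] unfolding E_def by (simp add: mult.assoc mult.commute[of _ "Abs_fps _"])
    ultimately show ?thesis by simp
  qed
  have GE: "eqM n G E" by (rule eqM_trans[OF GH HE])
  have key: "\<forall>m\<le>n. (\<Sum>k=0..m. R k * fps_nth (qbasis a b q k) m) = (\<Sum>k=0..m. P k * fps_nth (qbasis a b q k) m)"
  proof (intro allI impI)
    fix m assume m: "m \<le> n"
    have "(\<Sum>k=0..m. R k * fps_nth (qbasis a b q k) m) = (\<Sum>k=0..n. R k * fps_nth (qbasis a b q k) m)"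
      using m by (intro sum.mono_neutral_left) (auto simp: qbasis_nth_less)
    also have "\<dots> = fps_nth G m" unfolding G_def \<phi>_def by (simp add: fps_sum_nth)
    also have "\<dots> = y ^ m" using GE m unfolding eqM_def E_def by simp
    also have "\<dots> = (\<Sum>k=0..m. P k * fps_nth (qbasis a b q k) m)"
      unfolding P_def B_def by (rule P_expand[symmetric])
    finally show "(\<Sum>k=0..m. R k * fps_nth (qbasis a b q k) m) = (\<Sum>k=0..m. P k * fps_nth (qbasis a b q k) m)" .
  qed
  have RP: "R n = P n" by (rule tri_unique[OF key order.refl])
  have iv: "{0..n-1} = {..<n}" using assms(2) by auto
  have "(\<Sum>k=0..n-1. Bcoef a b q (n - k) 1 * q ^ ((n - k) * k)
                  * qpoch (b / y) q k / qpoch (a / y) q (k + 1) * y ^ k) = (\<Sum>i<n. T n i)"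
    unfolding iv T_def CC_def B_def by (intro sum.cong refl) (simp add: divide_inverse mult_ac)
  then show ?thesis using RP unfolding R_def P_def B_def AA_def by simp
qed

end
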